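(* Let $p\neq 2$ be a prime and $G=Z_{p^{\lambda_1}}\times\cdots\times Z_{p^{\lambda_n}}$ with $0<\lambda_1<\cdots<\lambda_n$. Let $i\in\{1,\dots,n\}$, $j\in\{1,\dots,\lambda_i\}$, and write $J(i,j)=R(\mathbf a)$ as in its definition. Then the number of elements of $J(G)$ contained in $J(i,j)$ is $\sum_{k=1}^n a_k$.
   Context: Tuples are ordered componentwise; for $\mathbf 0\le\mathbf a\le(\lambda_1,\dots,\lambda_n)$, $T(\mathbf a)$ is the set of $(g_1,\dots,g_n)\in G$ with $|g_i|=p^{a_i}$, and $R(\mathbf a)=\bigcup_{\mathbf b\le\mathbf a}T(\mathbf b)$. For $i\in\{1,\dots,n\}$ and $j\in\{1,\dots,\lambda_i\}$, $J(i,j)=R(\mathbf a)$ where $a_k=j$ for $k\ge i$ and $a_k=\max\{0,\,j-(\lambda_i-\lambda_k)\}$ for $k<i$. $J(G)$ is the set of all $J(i,j)$, partially ordered by inclusion. *)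

theory Defs
  imports "HOL-Computational_Algebra.Primes"
begin

text \<open>The group G = Z_{p^lam_1} x ... x Z_{p^lam_n}: tuples indexed by 1..n,
  with g k in {0..<p^lam k}, and g k = 0 outside 1..n (extensional).\<close>
definition Gcar :: "nat \<Rightarrow> nat \<Rightarrow> (nat \<Rightarrow> nat) \<Rightarrow> (nat \<Rightarrow> nat) set" where
  "Gcar p n lam = {g. (\<forall>k\<in>{1..n}. g k < p ^ lam k) \<and> (\<forall>k. k \<notin> {1..n} \<longrightarrow> g k = 0)}"

definition cyc_ord :: "nat \<Rightarrow> nat \<Rightarrow> nat" where
  "cyc_ord m x = (LEAST d. 0 < d \<and> m dvd d * x)"

definition Tset :: "nat \<Rightarrow> nat \<Rightarrow> (nat \<Rightarrow> nat) \<Rightarrow> (nat \<Rightarrow> nat) \<Rightarrow> (nat \<Rightarrow> nat) set" where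
  "Tset p n lam a = {g \<in> Gcar p n lam. \<forall>k\<in>{1..n}. cyc_ord (p ^ lam k) (g k) = p ^ a k}"

definition Rset :: "nat \<Rightarrow> nat \<Rightarrow> (nat \<Rightarrow> nat) \<Rightarrow> (nat \<Rightarrow> nat) \<Rightarrow> (nat \<Rightarrow> nat) set" where
  "Rset p n lam a = (\<Union> b \<in> {b. \<forall>k\<in>{1..n}. b k \<le> a k}. Tset p n lam b)"

definition Jvec :: "(nat \<Rightarrow> nat) \<Rightarrow> nat \<Rightarrow> nat \<Rightarrow> nat \<Rightarrow> nat" where
  "Jvec lam i j k = (if i \<le> k then j
      else nat (max 0 (int j - (int (lam i) - int (lam k)))))"

definition Jset :: "nat \<Rightarrow> nat \<Rightarrow> (nat \<Rightarrow> nat) \<Rightarrow> nat \<Rightarrow> nat \<Rightarrow> (nat \<Rightarrow> nat) set" where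
  "Jset p n lam i j = Rset p n lam (Jvec lam i j)"

definition JG :: "nat \<Rightarrow> nat \<Rightarrow> (nat \<Rightarrow> nat) \<Rightarrow> (nat \<Rightarrow> nat) set set" where
  "JG p n lam = {Jset p n lam i j | i j. i \<in> {1..n} \<and> j \<in> {1..lam i}}"

end

theory Submission
  imports Defs
begin

lemma cyc_ord_pow:
  assumes p: "prime (p::nat)" and e: "e \<le> L"
  shows "cyc_ord (p^L) (if e = 0 then 0 else p^(L-e)) = p^e"
proof (cases "e = 0")
  case True
  then show ?thesis unfolding cyc_ord_def
    by (intro Least_equality) auto
next
  case False
  have p0: "0 < p^(L-e)" using p by (simp add: prime_gt_0_nat)
  have L: "p^L = p^e * p^(L-e)" using e by (simp flip: power_add)
  have iff: "p^L dvd d * p^(L-e) \<longleftrightarrow> p^e dvd d" for d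
    unfolding L using p0 by (intro dvd_times_right_cancel_iff) auto
  have "(LEAST d. 0 < d \<and> p^L dvd d * p^(L-e)) = p^e"
  proof (intro Least_equality)
    show "0 < p^e \<and> p^L dvd p^e * p^(L-e)" using p iff by (simp add: prime_gt_0_nat)
    fix y assume "0 < y \<and> p^L dvd y * p^(L-e)"
    then show "p^e \<le> y" using iff by (auto intro: dvd_imp_le)
  qed
  then show ?thesis using False unfolding cyc_ord_def by simp
qed

lemma R_mono:
  assumes "\<forall>k\<in>{1..n}. a k \<le> b k"
  shows "Rset p n lam a \<subseteq> Rset p n lam b"
  using assms unfolding Rset_def by (auto intro: order_trans)

lemma R_witness:
  assumes p: "prime p" and a: "\<forall>k\<in>{1..n}. a k \<le> lam k"
    and sub: "Rset p n lam a \<subseteq> Rset p n lam b"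
  shows "\<forall>k\<in>{1..n}. a k \<le> b k"
proof
  fix k assume k: "k \<in> {1..n}"
  define g where "g = (\<lambda>k. if k \<in> {1..n} then (if a k = 0 then 0 else p^(lam k - a k)) else 0)"
  have p1: "1 < p" using p prime_gt_1_nat by blast
  have g: "g \<in> Gcar p n lam" unfolding Gcar_def
  proof (safe)
    fix l assume l: "l \<in> {1..n}"
    show "g l < p ^ lam l"
    proof (cases "a l = 0")
      case True then show ?thesis using l p1 by (simp add: g_def)
    next
      case False
      have "a l \<le> lam l" using a l by auto
      then have "lam l - a l < lam l" using False by linarith
      then show ?thesis using l False p1 by (simp add: g_def power_strict_increasing)
    qed
  qed (auto simp: g_def)
  have ord: "cyc_ord (p ^ lam l) (g l) = p ^ a l" if l: "l \<in> {1..n}" for l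
    using cyc_ord_pow[OF p, of "a l" "lam l"] a l by (simp add: g_def)
  have "g \<in> Tset p n lam a" unfolding Tset_def using g ord by auto
  then have "g \<in> Rset p n lam a" unfolding Rset_def by auto
  with sub have "g \<in> Rset p n lam b" by auto
  then obtain c where c: "\<forall>l\<in>{1..n}. c l \<le> b l" and gc: "g \<in> Tset p n lam c"
    unfolding Rset_def by auto
  have "p ^ a k = p ^ c k" using gc ord[OF k] k unfolding Tset_def by auto
  then have "a k = c k" using p1 by (simp add: power_inject_exp)
  then show "a k \<le> b k" using c k by auto
qed

theorem mainTheorem18:
  fixes p n :: nat and lam :: "nat \<Rightarrow> nat" and i j :: nat
  assumes "prime p" and "p \<noteq> 2"
    and "0 < lam 1"
    and "\<And>k l. k \<in> {1..n} \<Longrightarrow> l \<in> {1..n} \<Longrightarrow> k < l \<Longrightarrow> lam k < lam l"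
    and "i \<in> {1..n}" and "j \<in> {1..lam i}"
  shows "card {X \<in> JG p n lam. X \<subseteq> Jset p n lam i j} = (\<Sum>k=1..n. Jvec lam i j k)"
proof -
  define a where "a = Jvec lam i j"
  have mono: "lam x \<le> lam y" if "x \<in> {1..n}" "y \<in> {1..n}" "x \<le> y" for x y
    using assms(4)[of x y] that by (cases "x = y") auto
  have smono: "lam x < lam y" if "x \<in> {1..n}" "y \<in> {1..n}" "x < y" for x y
    using assms(4)[of x y] that by auto
  have Jle: "Jvec lam i' j' k \<le> lam k" if "i' \<in> {1..n}" "j' \<le> lam i'" "k \<in> {1..n}" for i' j' k
  proof (cases "i' \<le> k")
    case True then show ?thesis using mono[of i' k] that by (simp add: Jvec_def)
  next
    case False then show ?thesis using mono[of k i'] that by (simp add: Jvec_def)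
  qed
  have sub_iff: "Jset p n lam i' j' \<subseteq> Jset p n lam i j \<longleftrightarrow> (\<forall>k\<in>{1..n}. Jvec lam i' j' k \<le> a k)"
    if "i' \<in> {1..n}" "j' \<le> lam i'" for i' j'
    using R_mono[of n "Jvec lam i' j'" a p lam] R_witness[OF assms(1), of n "Jvec lam i' j'" lam a]
      Jle[OF that] unfolding Jset_def a_def by auto
  have key: "(\<forall>l\<in>{1..n}. Jvec lam k j' l \<le> a l) \<longleftrightarrow> j' \<le> a k"
    if k: "k \<in> {1..n}" and j': "1 \<le> j'" for k j'
  proof
    assume "\<forall>l\<in>{1..n}. Jvec lam k j' l \<le> a l"
    then have "Jvec lam k j' k \<le> a k" using k by blast
    then show "j' \<le> a k" by (simp add: Jvec_def)
  next
    assume le: "j' \<le> a k"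
    show "\<forall>l\<in>{1..n}. Jvec lam k j' l \<le> a l"
    proof
      fix l assume l: "l \<in> {1..n}"
      have m1: "k \<le> i \<longrightarrow> lam k \<le> lam i" using mono[of k i] k assms(5) by auto
      have m2: "i \<le> k \<longrightarrow> lam i \<le> lam k" using mono[of i k] k assms(5) by auto
      have m3: "k \<le> l \<longrightarrow> lam k \<le> lam l" using mono[of k l] k l by auto
      have m4: "l \<le> k \<longrightarrow> lam l \<le> lam k" using mono[of l k] k l by auto
      have m5: "l \<le> i \<longrightarrow> lam l \<le> lam i" using mono[of l i] l assms(5) by auto
      have m6: "i \<le> l \<longrightarrow> lam i \<le> lam l" using mono[of i l] l assms(5) by auto
      show "Jvec lam k j' l \<le> a l"
        using le j' m1 m2 m3 m4 m5 m6 unfolding a_def Jvec_def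
        by (auto split: if_splits)
    qed
  qed
  define S where "S = (SIGMA k:{1..n}. {1..a k})"
  have aS: "a k \<le> lam k" if "k \<in> {1..n}" for k
    using Jle[OF assms(5) _ that] assms(6) unfolding a_def by auto
  have inj: "inj_on (\<lambda>(i', j'). Jset p n lam i' j') S"
  proof (rule inj_onI, clarify)
    fix i1 j1 i2 j2 assume m1: "(i1, j1) \<in> S" and m2: "(i2, j2) \<in> S"
      and eq: "Jset p n lam i1 j1 = Jset p n lam i2 j2"
    have b1: "i1 \<in> {1..n}" "1 \<le> j1" "j1 \<le> lam i1" using m1 aS unfolding S_def by (auto intro: order_trans)
    have b2: "i2 \<in> {1..n}" "1 \<le> j2" "j2 \<le> lam i2" using m2 aS unfolding S_def by (auto intro: order_trans)
    have v: "\<forall>k\<in>{1..n}. Jvec lam i1 j1 k = Jvec lam i2 j2 k"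
      using R_witness[OF assms(1), of n "Jvec lam i1 j1" lam "Jvec lam i2 j2"]
        R_witness[OF assms(1), of n "Jvec lam i2 j2" lam "Jvec lam i1 j1"]
        Jle[OF b1(1) b1(3)] Jle[OF b2(1) b2(3)] eq unfolding Jset_def
      by (metis order.refl le_antisym)
    have c: False if "i1 < i2" "1 \<le> j1" "1 \<le> j2" "i1 \<in> {1..n}" "i2 \<in> {1..n}"
      and "\<forall>k\<in>{1..n}. Jvec lam i1 j1 k = Jvec lam i2 j2 k" for i1 i2 j1 j2
    proof -
      have "Jvec lam i1 j1 i2 = Jvec lam i2 j2 i2" "Jvec lam i1 j1 i1 = Jvec lam i2 j2 i1"
        using that by auto
      then show False using smono[of i1 i2] that by (simp add: Jvec_def)
    qed
    show "i1 = i2 \<and> j1 = j2"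
    proof (cases i1 i2 rule: linorder_cases)
      case less then show ?thesis using c[of i1 i2 j1 j2] b1 b2 v by auto
    next
      case greater then show ?thesis using c[of i2 i1 j2 j1] b1 b2 v by auto
    next
      case equal
      then have "Jvec lam i1 j1 i1 = Jvec lam i2 j2 i1" using v b1 by blast
      then show ?thesis using equal by (simp add: Jvec_def)
    qed
  qed
  have seteq: "{X \<in> JG p n lam. X \<subseteq> Jset p n lam i j} = (\<lambda>(i', j'). Jset p n lam i' j') ` S"
  proof (rule set_eqI, rule iffI)
    fix X assume "X \<in> {X \<in> JG p n lam. X \<subseteq> Jset p n lam i j}"
    then have X: "X \<in> JG p n lam" "X \<subseteq> Jset p n lam i j" by auto
    then obtain i' j' where ij: "X = Jset p n lam i' j'" "i' \<in> {1..n}" "j' \<in> {1..lam i'}"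
      unfolding JG_def by auto
    then have "j' \<le> a i'" using key[of i' j'] sub_iff[of i' j'] X by auto
    then show "X \<in> (\<lambda>(i', j'). Jset p n lam i' j') ` S" using ij unfolding S_def by force
  next
    fix X assume "X \<in> (\<lambda>(i', j'). Jset p n lam i' j') ` S"
    then obtain k j' where X: "X = Jset p n lam k j'" and "(k, j') \<in> S" by auto
    then have kj: "k \<in> {1..n}" "1 \<le> j'" "j' \<le> a k" unfolding S_def by auto
    then have jl: "j' \<le> lam k" using aS by (auto intro: order_trans)
    then have "Jset p n lam k j' \<in> JG p n lam" using kj unfolding JG_def by auto
    moreover have "Jset p n lam k j' \<subseteq> Jset p n lam i j"
      using sub_iff[of k j'] key[of k j'] kj jl by auto
    ultimately show "X \<in> {X \<in> JG p n lam. X \<subseteq> Jset p n lam i j}" using X by auto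
  qed
  have "card S = (\<Sum>k=1..n. a k)" unfolding S_def by simp
  then show ?thesis using seteq card_image[OF inj] unfolding a_def by simp
qed

end
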